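(* For all $v,w\in\mathfrak{H}^1$, \[ v\stackrel{t}{\ast}_\hbar w=(S_\hbar^t)^{-1}\bigl(S_\hbar^t(v)\ast_+S_\hbar^t(w)\bigr). \]
   Context: Let $\hbar,t$ be formal variables and $\mathfrak{H}=\mathbb{Q}[\hbar,t]\langle x,y\rangle$ the noncommutative polynomial algebra over $\mathbb{Q}[\hbar,t]$; put $\mathfrak{H}^1=\mathbb{Q}[\hbar,t]+\mathfrak{H}y$ and $z_j=x^{j-1}y$ ($j\ge1$). Let $\mathfrak z$ be the $\mathbb{Q}[\hbar,t]$-span of $\{z_j\}$ with bilinear product $z_i\circ_+ z_j=z_{i+j}+\hbar z_{i+j-1}$, extended to an action on $\mathfrak{H}^1$ by $z_i\circ_+1=0$, $z_i\circ_+(z_jw)=(z_i\circ_+z_j)w$. Let $S_\hbar^t:\mathfrak{H}^1\to\mathfrak{H}^1$ be the $\mathbb{Q}[\hbar,t]$-linear map with $S_\hbar^t(1)=1$ and $S_\hbar^t(z_kw)=z_kS_\hbar^t(w)+t\,z_k\circ_+S_\hbar^t(w)$ for words $w\in\mathfrak{H}^1$ (it is bijective). The product $\ast_+$ on $\mathfrak{H}^1$ is the $\mathbb{Q}[\hbar,t]$-bilinear product with $1\ast_+w=w\ast_+1=w$ and $z_iu\ast_+z_jv=z_i(u\ast_+z_jv)+z_j(z_iu\ast_+v)+(z_i\circ_+z_j)(u\ast_+v)$ for words $u,v,w$. The product $\stackrel{t}{\ast}_\hbar$ on $\mathfrak{H}^1$ is the $\mathbb{Q}[\hbar,t]$-bilinear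 product with $1\stackrel{t}{\ast}_\hbar w=w\stackrel{t}{\ast}_\hbar1=w$ and $z_iu\stackrel{t}{\ast}_\hbar z_jv=z_i(u\stackrel{t}{\ast}_\hbar z_jv)+z_j(z_iu\stackrel{t}{\ast}_\hbar v)+(1-2t)(z_i\circ_+z_j)(u\stackrel{t}{\ast}_\hbar v)+(t^2-t)\,z_i\circ_+z_j\circ_+(u\stackrel{t}{\ast}_\hbar v)$ for $i,j\ge1$ and words $u,v,w$ (here $z_i\circ_+z_j\circ_+X$ means $(z_i\circ_+z_j)\circ_+X$, and $(z_i\circ_+z_j)X$ denotes concatenation). *)

theory Defs
  imports "HOL-Computational_Algebra.Polynomial"
begin

text \<open>Coefficient ring Q[hbar,t] is rendered as rat poly poly: the outer variable is t,
  the inner variable is hbar.  A word z_{k1} ... z_{kn} of H^1 is the list [k1,...,kn]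
  (letters k >= 1).\<close>

type_synonym coef = "rat poly poly"
type_synonym hel = "nat list \<Rightarrow> coef"

definition hbar :: coef where "hbar = [: [:0, 1:] :]"
definition tvar :: coef where "tvar = [:0, 1:]"

definition supp :: "hel \<Rightarrow> nat list set" where
  "supp p = {u. p u \<noteq> 0}"

definition H1 :: "hel set" where
  "H1 = {p. finite (supp p) \<and> (\<forall>u \<in> supp p. \<forall>k \<in> set u. 1 \<le> k)}"

definition hzero :: hel where "hzero = (\<lambda>x. 0)"
definition hadd :: "hel \<Rightarrow> hel \<Rightarrow> hel" where "hadd p q = (\<lambda>x. p x + q x)"
definition hsc :: "coef \<Rightarrow> hel \<Rightarrow> hel" where "hsc c p = (\<lambda>x. c * p x)"

definition wd :: "nat list \<Rightarrow> hel" where "wd u = (\<lambda>x. if x = u then 1 else 0)"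

definition hcons :: "nat \<Rightarrow> hel \<Rightarrow> hel" where
  "hcons k p = (\<lambda>x. case x of [] \<Rightarrow> 0 | k' # x' \<Rightarrow> (if k' = k then p x' else 0))"

definition lin :: "(nat list \<Rightarrow> hel) \<Rightarrow> hel \<Rightarrow> hel" where
  "lin f p = (\<lambda>x. \<Sum>u\<in>supp p. p u * f u x)"

definition bilin :: "(nat list \<Rightarrow> nat list \<Rightarrow> hel) \<Rightarrow> hel \<Rightarrow> hel \<Rightarrow> hel" where
  "bilin f p q = (\<lambda>x. \<Sum>u\<in>supp p. \<Sum>v\<in>supp q. p u * q v * f u v x)"

fun circw :: "nat \<Rightarrow> nat list \<Rightarrow> hel" where
  "circw i [] = hzero"
| "circw i (j # w) = hadd (wd ((i + j) # w)) (hsc hbar (wd ((i + j - 1) # w)))"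

definition circ :: "nat \<Rightarrow> hel \<Rightarrow> hel" where
  "circ i p = lin (circw i) p"

text \<open>(z_i o_+ z_j) o_+ X = z_{i+j} o_+ X + hbar z_{i+j-1} o_+ X\<close>
definition circ2 :: "nat \<Rightarrow> nat \<Rightarrow> hel \<Rightarrow> hel" where
  "circ2 i j X = hadd (circ (i + j) X) (hsc hbar (circ (i + j - 1) X))"

text \<open>concatenation (z_i o_+ z_j) X\<close>
definition ccons2 :: "nat \<Rightarrow> nat \<Rightarrow> hel \<Rightarrow> hel" where
  "ccons2 i j X = hadd (hcons (i + j) X) (hsc hbar (hcons (i + j - 1) X))"

fun Sw :: "nat list \<Rightarrow> hel" where
  "Sw [] = wd []"
| "Sw (k # w) = hadd (hcons k (Sw w)) (hsc tvar (circ k (Sw w)))"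

definition S :: "hel \<Rightarrow> hel" where "S p = lin Sw p"

fun plusw :: "nat list \<Rightarrow> nat list \<Rightarrow> hel" where
  "plusw [] v = wd v"
| "plusw (i # u) [] = wd (i # u)"
| "plusw (i # u) (j # v) =
     hadd (hadd (hcons i (plusw u (j # v))) (hcons j (plusw (i # u) v)))
          (ccons2 i j (plusw u v))"

definition plusprod :: "hel \<Rightarrow> hel \<Rightarrow> hel" where
  "plusprod p q = bilin plusw p q"

fun tw :: "nat list \<Rightarrow> nat list \<Rightarrow> hel" where
  "tw [] v = wd v"
| "tw (i # u) [] = wd (i # u)"
| "tw (i # u) (j # v) =
     hadd (hadd (hcons i (tw u (j # v))) (hcons j (tw (i # u) v)))
          (hadd (hsc (1 - 2 * tvar) (ccons2 i j (tw u v)))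
                (hsc (tvar ^ 2 - tvar) (circ2 i j (tw u v))))"

definition tprod :: "hel \<Rightarrow> hel \<Rightarrow> hel" where
  "tprod p q = bilin tw p q"

end

theory Submission
  imports Defs "HOL-Library.Function_Algebras"
begin

declare One_nat_def[simp del]

definition K :: "coef \<Rightarrow> hel" where "K c = (\<lambda>_. c)"

lemma hadd_eq[simp]: "hadd p q = p + q" by (simp add: hadd_def fun_eq_iff)
lemma hzero_eq[simp]: "hzero = 0" by (simp add: hzero_def fun_eq_iff)
lemma hsc_eq[simp]: "hsc c p = K c * p" by (simp add: hsc_def K_def fun_eq_iff)
lemma K_apply[simp]: "K c x = c" by (simp add: K_def)
lemma K_add: "K (a+b) = K a + K b" by (simp add: K_def fun_eq_iff)
lemma K_diff: "K (a-b) = K a - K b" by (simp add: K_def fun_eq_iff)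
lemma K_mult: "K (a*b) = K a * K b" by (simp add: K_def fun_eq_iff)
lemma K_one: "K 1 = 1" by (simp add: K_def fun_eq_iff)
lemma K_zero: "K 0 = 0" by (simp add: K_def fun_eq_iff)
lemma K_numeral: "K (numeral n) = numeral n" by (simp add: K_def fun_eq_iff)
lemma K_pow_apply: "(K a ^ n) x = a ^ n" by (induct n) simp_all
lemma K_pow: "K (a^n) = K a ^ n" by (simp add: fun_eq_iff K_pow_apply)

abbreviation fin :: "hel \<Rightarrow> bool" where "fin p \<equiv> finite (supp p)"

lemma supp_iff[simp]: "u \<in> supp p \<longleftrightarrow> p u \<noteq> 0" by (simp add: supp_def)

lemma lin_A:
  assumes "finite A" "supp p \<subseteq> A"
  shows "lin f p x = (\<Sum>u\<in>A. p u * f u x)"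
  unfolding lin_def
  by (rule sum.mono_neutral_left) (use assms in auto)

lemma lin_add_f: "lin (\<lambda>u. f u + g u) p = lin f p + lin g p"
  by (simp add: lin_def fun_eq_iff sum.distrib distrib_left)
lemma lin_diff_f: "lin (\<lambda>u. f u - g u) p = lin f p - lin g p"
  by (simp add: lin_def fun_eq_iff sum_subtractf right_diff_distrib)
lemma lin_K_f: "lin (\<lambda>u. K c * f u) p = K c * lin f p"
  by (simp add: lin_def fun_eq_iff sum_distrib_left mult.left_commute)
lemma lin_zero_f: "lin (\<lambda>u. 0) p = 0"
  by (simp add: lin_def fun_eq_iff)

lemma supp_add: "supp (p + q) \<subseteq> supp p \<union> supp q" by auto
lemma supp_diff: "supp (p - q) \<subseteq> supp p \<union> supp q" by auto
lemma supp_K: "supp (K c * p) \<subseteq> supp p" by auto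

lemma lin_add: assumes "fin p" "fin q" shows "lin f (p + q) = lin f p + lin f q"
proof -
  have "lin f (p + q) x = lin f p x + lin f q x" for x
    using assms supp_add[of p q]
    by (simp add: lin_A[of "supp p \<union> supp q"] sum.distrib distrib_right)
  then show ?thesis by (simp add: fun_eq_iff)
qed

lemma lin_diff: assumes "fin p" "fin q" shows "lin f (p - q) = lin f p - lin f q"
proof -
  have "lin f (p - q) x = lin f p x - lin f q x" for x
    using assms supp_diff[of p q]
    by (simp add: lin_A[of "supp p \<union> supp q"] sum_subtractf left_diff_distrib)
  then show ?thesis by (simp add: fun_eq_iff)
qed

lemma lin_K: assumes "fin p" shows "lin f (K c * p) = K c * lin f p"
proof -
  have "lin f (K c * p) x = c * lin f p x" for x
    using assms supp_K[of c p]
    by (simp add: lin_A[of "supp p"] sum_distrib_left mult.assoc)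
  then show ?thesis by (simp add: fun_eq_iff)
qed

lemma lin_zero[simp]: "lin f 0 = 0" by (simp add: lin_def fun_eq_iff supp_def)

lemma supp_wd[simp]: "supp (wd u) = {u}" by (auto simp: wd_def supp_def)
lemma lin_wd[simp]: "lin f (wd u) = f u" unfolding lin_def supp_wd by (simp add: wd_def fun_eq_iff)

lemma lin_cong: "(\<And>u. u \<in> supp p \<Longrightarrow> f u = g u) \<Longrightarrow> lin f p = lin g p"
  by (simp add: lin_def fun_eq_iff)

lemma lin_wd_id: assumes "fin p" shows "lin wd p = p"
proof -
  have "lin wd p x = p x" for x
  proof (cases "x \<in> supp p")
    case True
    then show ?thesis unfolding lin_def wd_def
      using assms by (simp add: sum.delta' [where S="supp p"] if_distrib cong: if_cong)
  next
    case False
    then show ?thesis unfolding lin_def wd_def by (subst sum.neutral) auto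
  qed
  then show ?thesis by (simp add: fun_eq_iff)
qed

lemma supp_lin: "supp (lin f p) \<subseteq> (\<Union>u\<in>supp p. supp (f u))"
proof
  fix x assume "x \<in> supp (lin f p)"
  then have "(\<Sum>u\<in>supp p. p u * f u x) \<noteq> 0" by (simp add: lin_def)
  then obtain u where "u \<in> supp p" "p u * f u x \<noteq> 0" by (meson sum.neutral)
  then show "x \<in> (\<Union>u\<in>supp p. supp (f u))" by auto
qed

lemma fin_lin: "fin p \<Longrightarrow> (\<And>u. u \<in> supp p \<Longrightarrow> fin (f u)) \<Longrightarrow> fin (lin f p)"
  by (rule finite_subset[OF supp_lin]) auto

lemma lin_comp:
  assumes "fin p" "\<And>u. u \<in> supp p \<Longrightarrow> fin (f u)"
  shows "lin g (lin f p) = lin (\<lambda>u. lin g (f u)) p"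
proof -
  define A where "A = (\<Union>u\<in>supp p. supp (f u))"
  have A: "finite A" using assms by (auto simp: A_def)
  have "lin g (lin f p) x = lin (\<lambda>u. lin g (f u)) p x" for x
  proof -
    have "lin g (lin f p) x = (\<Sum>w\<in>A. lin f p w * g w x)"
      using A supp_lin[of f p] by (simp add: lin_A A_def)
    also have "\<dots> = (\<Sum>w\<in>A. \<Sum>u\<in>supp p. p u * f u w * g w x)"
      by (simp add: lin_def sum_distrib_right)
    also have "\<dots> = (\<Sum>u\<in>supp p. p u * (\<Sum>w\<in>A. f u w * g w x))"
      by (subst sum.swap) (simp add: sum_distrib_left mult.assoc)
    also have "\<dots> = (\<Sum>u\<in>supp p. p u * lin g (f u) x)"
    proof (rule sum.cong)
      fix u assume u: "u \<in> supp p"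
      then have "supp (f u) \<subseteq> A" by (auto simp: A_def)
      then show "p u * (\<Sum>w\<in>A. f u w * g w x) = p u * lin g (f u) x"
        by (simp add: lin_A[OF A])
    qed simp
    finally show ?thesis by (simp add: lin_def)
  qed
  then show ?thesis by (simp add: fun_eq_iff)
qed

lemma lin_swap: "lin (\<lambda>u. lin (\<lambda>v. h u v) q) p = lin (\<lambda>v. lin (\<lambda>u. h u v) p) q"
  unfolding lin_def fun_eq_iff
  by (auto simp: sum_distrib_left mult_ac intro: sum.swap)

lemma hcons_lin: "hcons k (lin f p) = lin (\<lambda>u. hcons k (f u)) p"
  by (auto simp: hcons_def lin_def fun_eq_iff split: list.split)

lemma supp_hcons: "supp (hcons k p) = Cons k ` supp p"
proof (rule set_eqI)
  fix x show "x \<in> supp (hcons k p) \<longleftrightarrow> x \<in> Cons k ` supp p"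
    by (cases x) (auto simp: hcons_def supp_def)
qed

lemma lin_hcons: "lin f (hcons k p) = lin (\<lambda>x. f (k#x)) p"
proof -
  have "lin f (hcons k p) x = lin (\<lambda>x. f (k#x)) p x" for x
    unfolding lin_def supp_hcons
    by (subst sum.reindex) (auto simp: inj_on_def hcons_def)
  then show ?thesis by (simp add: fun_eq_iff)
qed

lemma hcons_add: "hcons k (p + q) = hcons k p + hcons k q"
  by (auto simp: hcons_def fun_eq_iff split: list.split)
lemma hcons_diff: "hcons k (p - q) = hcons k p - hcons k q"
  by (auto simp: hcons_def fun_eq_iff split: list.split)
lemma hcons_K: "hcons k (K c * p) = K c * hcons k p"
  by (auto simp: hcons_def fun_eq_iff split: list.split)
lemma hcons_zero[simp]: "hcons k 0 = 0"
  by (auto simp: hcons_def fun_eq_iff split: list.split)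
lemma hcons_wd[simp]: "hcons k (wd u) = wd (k#u)"
  by (auto simp: hcons_def wd_def fun_eq_iff split: list.split)

definition lw :: "nat list \<Rightarrow> bool" where "lw u \<longleftrightarrow> (\<forall>k\<in>set u. 1 \<le> k)"
lemma lw_simps[simp]: "lw []" "lw (k#u) \<longleftrightarrow> 1 \<le> k \<and> lw u" by (auto simp: lw_def)

lemma H1_iff: "p \<in> H1 \<longleftrightarrow> fin p \<and> (\<forall>u\<in>supp p. lw u)"
  by (auto simp: H1_def lw_def)
lemma H1_fin: "p \<in> H1 \<Longrightarrow> fin p" by (simp add: H1_iff)
lemma H1_supp: "p \<in> H1 \<Longrightarrow> u \<in> supp p \<Longrightarrow> lw u" by (simp add: H1_iff)

lemma fin_add[simp]: "fin p \<Longrightarrow> fin q \<Longrightarrow> fin (p + q)"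
  by (rule finite_subset[OF supp_add]) auto
lemma fin_diff[simp]: "fin p \<Longrightarrow> fin q \<Longrightarrow> fin (p - q)"
  by (rule finite_subset[OF supp_diff]) auto
lemma fin_K[simp]: "fin p \<Longrightarrow> fin (K c * p)"
  by (rule finite_subset[OF supp_K]) auto
lemma fin_zero[simp]: "fin 0" by (simp add: supp_def)

lemma H1_lin: "fin p \<Longrightarrow> (\<And>u. u \<in> supp p \<Longrightarrow> f u \<in> H1) \<Longrightarrow> lin f p \<in> H1"
  unfolding H1_iff using supp_lin[of f p]
  by (auto intro!: fin_lin)
lemma H1_add: "p \<in> H1 \<Longrightarrow> q \<in> H1 \<Longrightarrow> p + q \<in> H1"
  unfolding H1_iff using supp_add[of p q] by (auto intro: finite_subset)
lemma H1_diff: "p \<in> H1 \<Longrightarrow> q \<in> H1 \<Longrightarrow> p - q \<in> H1"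
  unfolding H1_iff using supp_diff[of p q] by (auto intro: finite_subset)
lemma H1_K: "p \<in> H1 \<Longrightarrow> K c * p \<in> H1"
  unfolding H1_iff using supp_K[of c p] by (auto intro: finite_subset)
lemma H1_zero: "0 \<in> H1" by (simp add: H1_iff supp_def)
lemma H1_wd: "lw u \<Longrightarrow> wd u \<in> H1" by (simp add: H1_iff)
lemma H1_hcons: "1 \<le> k \<Longrightarrow> p \<in> H1 \<Longrightarrow> hcons k p \<in> H1"
  unfolding H1_iff supp_hcons by auto

lemmas H1_intros = H1_add H1_diff H1_K H1_zero H1_wd H1_hcons

lemma circ_wd[simp]: "circ i (wd u) = circw i u" by (simp add: circ_def)
lemma circw_Nil: "circw i [] = 0" by simp
lemma circw_Cons: "circw i (j # w) = wd ((i + j) # w) + K hbar * wd ((i + j - 1) # w)" by simp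
lemma H1_circw: "1 \<le> i \<Longrightarrow> lw w \<Longrightarrow> circw i w \<in> H1"
  by (cases w) (auto intro!: H1_intros simp del: circw.simps simp: circw_Cons circw.simps(1))
lemma H1_circ: "1 \<le> i \<Longrightarrow> p \<in> H1 \<Longrightarrow> circ i p \<in> H1"
  unfolding circ_def by (auto intro!: H1_lin H1_circw H1_fin dest: H1_supp)

lemma fin_circw: "fin (circw i w)"
  by (cases w) auto

lemma circ_lin: "fin p \<Longrightarrow> (\<And>u. u \<in> supp p \<Longrightarrow> fin (f u)) \<Longrightarrow> circ i (lin f p) = lin (\<lambda>u. circ i (f u)) p"
  unfolding circ_def by (rule lin_comp)
lemma circ_add: "fin p \<Longrightarrow> fin q \<Longrightarrow> circ i (p + q) = circ i p + circ i q"
  unfolding circ_def by (rule lin_add)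
lemma circ_diff: "fin p \<Longrightarrow> fin q \<Longrightarrow> circ i (p - q) = circ i p - circ i q"
  unfolding circ_def by (rule lin_diff)
lemma circ_K: "fin p \<Longrightarrow> circ i (K c * p) = K c * circ i p"
  unfolding circ_def by (rule lin_K)
lemma circ_zero[simp]: "circ i 0 = 0" unfolding circ_def by simp

lemma lin_wdcons: "fin Z \<Longrightarrow> lin (\<lambda>x. wd (k # x)) Z = hcons k Z"
proof -
  assume "fin Z"
  have "lin (\<lambda>x. wd (k # x)) Z = lin (\<lambda>x. hcons k (wd x)) Z" by simp
  also have "\<dots> = hcons k (lin wd Z)" by (simp add: hcons_lin)
  finally show ?thesis using \<open>fin Z\<close> by (simp add: lin_wd_id)
qed

lemma circ_hcons: "fin Z \<Longrightarrow> circ i (hcons j Z) = hcons (i + j) Z + K hbar * hcons (i + j - 1) Z"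
  unfolding circ_def lin_hcons circw_Cons
  by (simp add: lin_add_f lin_K_f lin_wdcons del: circw.simps)

lemma circ_circw: "1 \<le> j \<Longrightarrow> lw u \<Longrightarrow> circ i (circw j u) = circw (i + j) u + K hbar * circw (i + j - 1) u"
proof (cases u)
  case Nil then show ?thesis by simp
next
  case (Cons k x)
  assume "1 \<le> j" "lw u"
  with Cons have k: "1 \<le> k" by simp
  have e1: "i + (j + k) = i + j + k" "i + (j + k - 1) = i + j + k - 1" "i + (j + k) - 1 = i + j + k - 1"
    "i + (j + k - 1) - 1 = i + j + k - 2" "i + j - 1 + k = i + j + k - 1" "i + j - 1 + k - 1 = i + j + k - 2"
    using k \<open>1 \<le> j\<close> by auto
  have "circ i (circw j u) = circw i ((j + k) # x) + K hbar * circw i ((j + k - 1) # x)"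
    using Cons by (simp add: circ_add circ_K fin_circw del: circw.simps add: circw_Cons)
  also have "\<dots> = circw (i + j) u + K hbar * circw (i + j - 1) u"
    using Cons by (simp only: circw_Cons e1)
  finally show ?thesis .
qed

lemma circ_circ: "1 \<le> j \<Longrightarrow> Z \<in> H1 \<Longrightarrow> circ i (circ j Z) = circ (i + j) Z + K hbar * circ (i + j - 1) Z"
proof -
  assume j: "1 \<le> j" and Z: "Z \<in> H1"
  have "circ i (circ j Z) = lin (\<lambda>u. circ i (circw j u)) Z"
    unfolding circ_def[of j] using Z by (simp add: circ_lin H1_fin fin_circw)
  also have "\<dots> = lin (\<lambda>u. circw (i + j) u + K hbar * circw (i + j - 1) u) Z"
    by (rule lin_cong) (use j Z in \<open>simp add: circ_circw H1_supp\<close>)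
  also have "\<dots> = circ (i + j) Z + K hbar * circ (i + j - 1) Z"
    by (simp add: lin_add_f lin_K_f circ_def)
  finally show ?thesis .
qed

declare supp_iff[simp del]

definition linop :: "(hel \<Rightarrow> hel) \<Rightarrow> bool" where
  "linop L \<longleftrightarrow> (\<forall>p\<in>H1. L p \<in> H1) \<and> (\<forall>p\<in>H1. \<forall>q\<in>H1. L (p + q) = L p + L q)
     \<and> (\<forall>c. \<forall>p\<in>H1. L (K c * p) = K c * L p)
     \<and> (\<forall>f p. p \<in> H1 \<longrightarrow> (\<forall>u\<in>supp p. f u \<in> H1) \<longrightarrow> L (lin f p) = lin (\<lambda>u. L (f u)) p)"

lemma linopI:
  assumes "\<And>p. p \<in> H1 \<Longrightarrow> L p \<in> H1"
    and "\<And>p q. p \<in> H1 \<Longrightarrow> q \<in> H1 \<Longrightarrow> L (p + q) = L p + L q"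
    and "\<And>c p. p \<in> H1 \<Longrightarrow> L (K c * p) = K c * L p"
    and "\<And>f p. p \<in> H1 \<Longrightarrow> (\<And>u. u\<in>supp p \<Longrightarrow> f u \<in> H1) \<Longrightarrow> L (lin f p) = lin (\<lambda>u. L (f u)) p"
  shows "linop L"
  using assms unfolding linop_def by blast

lemma linopD:
  assumes "linop L"
  shows "\<And>p. p \<in> H1 \<Longrightarrow> L p \<in> H1"
    and "\<And>p q. p \<in> H1 \<Longrightarrow> q \<in> H1 \<Longrightarrow> L (p + q) = L p + L q"
    and "\<And>c p. p \<in> H1 \<Longrightarrow> L (K c * p) = K c * L p"
    and "\<And>f p. p \<in> H1 \<Longrightarrow> (\<And>u. u\<in>supp p \<Longrightarrow> f u \<in> H1) \<Longrightarrow> L (lin f p) = lin (\<lambda>u. L (f u)) p"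
  using assms unfolding linop_def by blast+

lemma linop_diff_app: "linop L \<Longrightarrow> p \<in> H1 \<Longrightarrow> q \<in> H1 \<Longrightarrow> L (p - q) = L p - L q"
  using linopD(2)[of L "p - q" q] by (simp add: H1_diff)

lemma linop_zero_app: "linop L \<Longrightarrow> L 0 = 0"
  using linopD(3)[of L 0 0] by (simp add: H1_zero K_zero)

lemma linop_lift:
  assumes "linop LA" "linop LB" "\<And>u. lw u \<Longrightarrow> LA (wd u) = LB (wd u)" "p \<in> H1"
  shows "LA p = LB p"
proof -
  have "LA p = LA (lin wd p)" using assms(4) by (simp add: lin_wd_id H1_fin)
  also have "\<dots> = lin (\<lambda>u. LA (wd u)) p"
    using assms by (intro linopD(4)) (auto intro!: H1_wd elim: H1_supp)
  also have "\<dots> = lin (\<lambda>u. LB (wd u)) p"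
    using assms by (intro lin_cong) (auto dest: H1_supp)
  also have "\<dots> = LB (lin wd p)"
    using assms by (intro linopD(4)[symmetric]) (auto intro!: H1_wd elim: H1_supp)
  also have "\<dots> = LB p" using assms(4) by (simp add: lin_wd_id H1_fin)
  finally show ?thesis .
qed

lemma linop_id: "linop (\<lambda>x. x)"
  by (rule linopI) simp_all

lemma linop_comp: assumes a: "linop A" and l: "linop L" shows "linop (\<lambda>x. A (L x))"
proof (rule linopI)
  fix f p assume p: "p \<in> H1" and f: "\<And>u. u \<in> supp p \<Longrightarrow> f u \<in> H1"
  show "A (L (lin f p)) = lin (\<lambda>u. A (L (f u))) p"
    using p f by (simp add: linopD(4)[OF l] linopD(4)[OF a] linopD(1)[OF l])
qed (simp_all add: linopD[OF a] linopD[OF l] H1_K)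

lemma linop_add: assumes a: "linop A" and l: "linop L" shows "linop (\<lambda>x. A x + L x)"
proof (rule linopI)
  fix f p assume p: "p \<in> H1" and f: "\<And>u. u \<in> supp p \<Longrightarrow> f u \<in> H1"
  show "A (lin f p) + L (lin f p) = lin (\<lambda>u. A (f u) + L (f u)) p"
    using p f by (simp add: linopD(4)[OF l] linopD(4)[OF a] lin_add_f)
next
  fix c p assume p: "p \<in> H1"
  show "A (K c * p) + L (K c * p) = K c * (A p + L p)"
    using p by (simp add: linopD(3)[OF l] linopD(3)[OF a] distrib_left)
qed (simp_all add: linopD[OF a] linopD[OF l] H1_add H1_K add_ac)

lemma linop_diff: assumes a: "linop A" and l: "linop L" shows "linop (\<lambda>x. A x - L x)"
proof (rule linopI)
  fix f p assume p: "p \<in> H1" and f: "\<And>u. u \<in> supp p \<Longrightarrow> f u \<in> H1"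
  show "A (lin f p) - L (lin f p) = lin (\<lambda>u. A (f u) - L (f u)) p"
    using p f by (simp add: linopD(4)[OF l] linopD(4)[OF a] lin_diff_f)
next
  fix c p assume p: "p \<in> H1"
  show "A (K c * p) - L (K c * p) = K c * (A p - L p)"
    using p by (simp add: linopD(3)[OF l] linopD(3)[OF a] right_diff_distrib)
qed (simp_all add: linopD[OF a] linopD[OF l] H1_diff H1_K)

lemma linop_Km: assumes l: "linop L" shows "linop (\<lambda>x. K c * L x)"
proof (rule linopI)
  fix f p assume p: "p \<in> H1" and f: "\<And>u. u \<in> supp p \<Longrightarrow> f u \<in> H1"
  show "K c * L (lin f p) = lin (\<lambda>u. K c * L (f u)) p"
    using p f by (simp add: linopD(4)[OF l] lin_K_f)
next
  fix d p assume p: "p \<in> H1"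
  show "K c * L (K d * p) = K d * (K c * L p)"
    using p by (simp add: linopD(3)[OF l] mult.left_commute)
qed (simp_all add: linopD[OF l] H1_K distrib_left)

lemma linop_hcons0: "1 \<le> k \<Longrightarrow> linop (hcons k)"
  by (rule linopI) (simp_all add: H1_hcons hcons_add hcons_K hcons_lin)

lemma linop_circ0: "1 \<le> k \<Longrightarrow> linop (circ k)"
  by (rule linopI) (simp_all add: H1_circ circ_add circ_K circ_lin H1_fin)

lemma linop_hcons: "linop L \<Longrightarrow> 1 \<le> k \<Longrightarrow> linop (\<lambda>x. hcons k (L x))"
  using linop_comp[OF linop_hcons0] .
lemma linop_circ: "linop L \<Longrightarrow> 1 \<le> k \<Longrightarrow> linop (\<lambda>x. circ k (L x))"
  using linop_comp[OF linop_circ0] .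

lemma H1_Sw: "lw u \<Longrightarrow> Sw u \<in> H1"
  by (induct u) (auto intro!: H1_intros H1_circ)

lemma linop_S0: "linop S"
  unfolding S_def
  by (rule linopI) (auto simp: lin_add lin_K H1_fin intro!: H1_lin H1_Sw dest: H1_supp
        intro: lin_comp H1_Sw)

lemma linop_S: "linop L \<Longrightarrow> linop (\<lambda>x. S (L x))"
  using linop_comp[OF linop_S0] .

lemma S_wd[simp]: "S (wd u) = Sw u" by (simp add: S_def)

lemma P_eq: "plusprod p q = lin (\<lambda>u. lin (plusw u) q) p"
  by (simp add: plusprod_def bilin_def lin_def fun_eq_iff sum_distrib_left mult.assoc)

lemma P_wd[simp]: "plusprod (wd u) (wd v) = plusw u v" by (simp add: P_eq)

lemma H1_ccons2: "1 \<le> i \<Longrightarrow> 1 \<le> j \<Longrightarrow> X \<in> H1 \<Longrightarrow> ccons2 i j X \<in> H1"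
  unfolding ccons2_def by (auto intro!: H1_intros)

lemma H1_plusw: "lw u \<Longrightarrow> lw v \<Longrightarrow> plusw u v \<in> H1"
  by (induct u v rule: plusw.induct) (auto intro!: H1_intros H1_ccons2)

lemma H1_P: "p \<in> H1 \<Longrightarrow> q \<in> H1 \<Longrightarrow> plusprod p q \<in> H1"
  unfolding P_eq by (auto intro!: H1_lin H1_plusw H1_fin dest: H1_supp)

lemma linop_Pl0: "q \<in> H1 \<Longrightarrow> linop (\<lambda>x. plusprod x q)"
  unfolding P_eq
  by (rule linopI) (auto simp: lin_add lin_K H1_fin dest: H1_supp
      intro!: H1_lin H1_plusw lin_comp fin_lin)

lemma linop_Pr0: "q \<in> H1 \<Longrightarrow> linop (\<lambda>x. plusprod q x)"
proof (rule linopI)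
  fix p assume "q \<in> H1" "p \<in> H1" then show "plusprod q p \<in> H1" by (rule H1_P)
next
  fix p r assume "q \<in> H1" "p \<in> H1" "r \<in> H1"
  then show "plusprod q (p + r) = plusprod q p + plusprod q r"
    by (simp add: P_eq lin_add H1_fin lin_add_f)
next
  fix c p assume "q \<in> H1" "p \<in> H1"
  then show "plusprod q (K c * p) = K c * plusprod q p"
    by (simp add: P_eq lin_K H1_fin lin_K_f)
next
  fix f p assume q: "q \<in> H1" and p: "p \<in> H1" and f: "\<And>u. u \<in> supp p \<Longrightarrow> f u \<in> H1"
  have "plusprod q (lin f p) = lin (\<lambda>u. lin (\<lambda>v. lin (plusw u) (f v)) p) q"
    unfolding P_eq by (rule lin_cong) (use p f in \<open>auto intro!: lin_comp simp: H1_fin\<close>)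
  also have "\<dots> = lin (\<lambda>v. plusprod q (f v)) p"
    by (subst lin_swap) (simp add: P_eq)
  finally show "plusprod q (lin f p) = lin (\<lambda>u. plusprod q (f u)) p" .
qed

lemma linop_Pl: "linop L \<Longrightarrow> q \<in> H1 \<Longrightarrow> linop (\<lambda>x. plusprod (L x) q)"
  using linop_comp[OF linop_Pl0] by blast
lemma linop_Pr: "linop L \<Longrightarrow> q \<in> H1 \<Longrightarrow> linop (\<lambda>x. plusprod q (L x))"
  using linop_comp[OF linop_Pr0] by blast

lemmas linop_intros = linop_add linop_diff linop_Km linop_hcons linop_circ linop_S linop_Pl linop_Pr linop_id

lemma ccons2_eq[simp]: "ccons2 i j X = hcons (i + j) X + K hbar * hcons (i + j - 1) X"
  by (simp add: ccons2_def)
lemma circ2_eq[simp]: "circ2 i j X = circ (i + j) X + K hbar * circ (i + j - 1) X"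
  by (simp add: circ2_def)
lemma Sw_Cons': "Sw (k # w) = hcons k (Sw w) + K tvar * circ k (Sw w)" by simp

lemma fin_plusw[simp]: "lw u \<Longrightarrow> lw v \<Longrightarrow> fin (plusw u v)"
  by (simp add: H1_plusw H1_fin)
lemma fin_Sw[simp]: "lw u \<Longrightarrow> fin (Sw u)"
  by (simp add: H1_Sw H1_fin)

lemma fin_hcons[simp]: "fin p \<Longrightarrow> fin (hcons k p)" by (simp add: supp_hcons)
lemma fin_wd[simp]: "fin (wd u)" by simp

lemma plusw_Nil2[simp]: "plusw u [] = wd u" by (cases u) simp_all

lemma P_zero_l[simp]: "plusprod 0 q = 0" by (simp add: P_eq)
lemma P_zero_r[simp]: "plusprod q 0 = 0" by (simp add: P_eq lin_zero_f)
lemma plusw_Nil1: "plusw [] = wd" by (simp add: fun_eq_iff)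
lemma P_Nil_l: "fin q \<Longrightarrow> plusprod (wd []) q = q" by (simp add: P_eq lin_wd_id plusw_Nil1)
lemma P_Nil_r: "fin q \<Longrightarrow> plusprod q (wd []) = q" by (simp add: P_eq lin_wd_id)

lemma P_add_l: "p \<in> H1 \<Longrightarrow> r \<in> H1 \<Longrightarrow> q \<in> H1 \<Longrightarrow> plusprod (p + r) q = plusprod p q + plusprod r q"
  using linopD(2)[OF linop_Pl0] by blast
lemma P_add_r: "p \<in> H1 \<Longrightarrow> r \<in> H1 \<Longrightarrow> q \<in> H1 \<Longrightarrow> plusprod q (p + r) = plusprod q p + plusprod q r"
  using linopD(2)[OF linop_Pr0] by blast
lemma P_K_l: "p \<in> H1 \<Longrightarrow> q \<in> H1 \<Longrightarrow> plusprod (K c * p) q = K c * plusprod p q"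
  using linopD(3)[OF linop_Pl0] by blast
lemma P_K_r: "p \<in> H1 \<Longrightarrow> q \<in> H1 \<Longrightarrow> plusprod q (K c * p) = K c * plusprod q p"
  using linopD(3)[OF linop_Pr0] by blast
lemma S_zero[simp]: "S 0 = 0" by (simp add: S_def)
lemma S_add: "p \<in> H1 \<Longrightarrow> q \<in> H1 \<Longrightarrow> S (p + q) = S p + S q"
  using linopD(2)[OF linop_S0] by blast
lemma S_K: "p \<in> H1 \<Longrightarrow> S (K c * p) = K c * S p"
  using linopD(3)[OF linop_S0] by blast

lemma bilift:
  assumes "\<And>V. V \<in> H1 \<Longrightarrow> linop (\<lambda>U. F U V)" "\<And>V. V \<in> H1 \<Longrightarrow> linop (\<lambda>U. G U V)"
    "\<And>u. lw u \<Longrightarrow> linop (\<lambda>V. F (wd u) V)" "\<And>u. lw u \<Longrightarrow> linop (\<lambda>V. G (wd u) V)"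
    "\<And>u v. lw u \<Longrightarrow> lw v \<Longrightarrow> F (wd u) (wd v) = G (wd u) (wd v)" "U \<in> H1" "V \<in> H1"
  shows "F U V = G U V"
proof -
  have "F (wd u) V = G (wd u) V" if "lw u" for u
    using linop_lift[OF assms(3)[OF that] assms(4)[OF that] assms(5)[OF that] assms(7)] .
  then show ?thesis
    using linop_lift[OF assms(1)[OF assms(7)] assms(2)[OF assms(7)] _ assms(6)] by blast
qed

lemmas H1_all = H1_intros H1_circ H1_P H1_Sw H1_plusw H1_circw

lemma S_hcons: assumes "W \<in> H1" "1 \<le> k"
  shows "S (hcons k W) = hcons k (S W) + K tvar * circ k (S W)"
proof (rule linop_lift[where LA="\<lambda>W. S (hcons k W)" and LB="\<lambda>W. hcons k (S W) + K tvar * circ k (S W)", OF _ _ _ assms(1)])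
  show "linop (\<lambda>W. S (hcons k W))" using assms by (intro linop_intros) auto
  show "linop (\<lambda>W. hcons k (S W) + K tvar * circ k (S W))" using assms by (intro linop_intros) auto
qed simp

lemma S_circ: assumes "W \<in> H1" "1 \<le> k"
  shows "S (circ k W) = circ k (S W)"
proof (rule linop_lift[where LA="\<lambda>W. S (circ k W)" and LB="\<lambda>W. circ k (S W)", OF _ _ _ assms(1)])
  show "linop (\<lambda>W. S (circ k W))" using assms by (intro linop_intros) auto
  show "linop (\<lambda>W. circ k (S W))" using assms by (intro linop_intros) auto
next
  fix u :: "nat list" assume u: "lw u"
  show "S (circ k (wd u)) = circ k (S (wd u))"
  proof (cases u)
    case Nil then show ?thesis by simp
  next
    case (Cons j x)
    with u have j: "1 \<le> j" and x: "lw x" by auto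
    have "S (circ k (wd u)) = Sw ((k + j) # x) + K hbar * Sw ((k + j - 1) # x)"
      using Cons j x assms by (simp add: S_add S_K H1_all del: Sw.simps circw.simps add: circw_Cons)
    also have "\<dots> = circ k (Sw u)"
      using Cons j x assms
      by (simp add: circ_add circ_K H1_fin H1_all circ_hcons circ_circ del: Sw.simps add: Sw_Cons')
        (simp add: algebra_simps)
    finally show ?thesis by simp
  qed
qed

lemma P0: assumes "U \<in> H1" "V \<in> H1" "1 \<le> i" "1 \<le> j"
  shows "plusprod (hcons i U) (hcons j V) = hcons i (plusprod U (hcons j V)) + hcons j (plusprod (hcons i U) V) + ccons2 i j (plusprod U V)"
proof (rule bilift[where F="\<lambda>U V. plusprod (hcons i U) (hcons j V)" and G="\<lambda>U V. hcons i (plusprod U (hcons j V)) + hcons j (plusprod (hcons i U) V) + ccons2 i j (plusprod U V)", OF _ _ _ _ _ assms(1,2)])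
  fix u v :: "nat list" assume "lw u" "lw v"
  show "plusprod (hcons i (wd u)) (hcons j (wd v)) = hcons i (plusprod (wd u) (hcons j (wd v))) + hcons j (plusprod (hcons i (wd u)) (wd v)) + ccons2 i j (plusprod (wd u) (wd v))"
    by (simp del: ccons2_eq)
qed (use assms in \<open>(intro linop_intros; auto intro!: H1_all)+\<close>)

lemma sucE: "1 \<le> (i::nat) \<Longrightarrow> (\<And>i0. i = Suc i0 \<Longrightarrow> P) \<Longrightarrow> P"
  by (cases i) auto

lemmas H1_simps = H1_intros H1_circ H1_P H1_Sw H1_plusw H1_circw

lemma L1: assumes "U \<in> H1" "V \<in> H1" "1 \<le> i" "1 \<le> j"
  shows "plusprod (circ i U) (hcons j V) = circ i (plusprod U (hcons j V)) - ccons2 i j (plusprod U V) + hcons j (plusprod (circ i U) V)"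
proof (rule bilift[where F="\<lambda>U V. plusprod (circ i U) (hcons j V)" and G="\<lambda>U V. circ i (plusprod U (hcons j V)) - ccons2 i j (plusprod U V) + hcons j (plusprod (circ i U) V)", OF _ _ _ _ _ assms(1,2)])
  fix u v :: "nat list" assume u: "lw u" and v: "lw v"
  show "plusprod (circ i (wd u)) (hcons j (wd v)) = circ i (plusprod (wd u) (hcons j (wd v))) - ccons2 i j (plusprod (wd u) (wd v)) + hcons j (plusprod (circ i (wd u)) (wd v))"
  proof (cases u)
    case Nil
    then show ?thesis using assms by (simp add: P_Nil_l)
  next
    case (Cons k u')
    with u have k: "1 \<le> k" and u': "lw u'" by auto
    obtain i0 where i: "i = Suc i0" using assms(3) by (rule sucE)
    obtain j0 where j: "j = Suc j0" using assms(4) by (rule sucE)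
    obtain k0 where k0: "k = Suc k0" using k by (rule sucE)
    show ?thesis using u' v unfolding Cons i j k0
      by (simp add: P_add_l P_K_l H1_simps circ_add circ_K circ_hcons hcons_add hcons_K hcons_diff
          del: circw.simps plusw.simps add: circw_Cons plusw.simps(3))
        (simp add: algebra_simps)
  qed
qed (use assms in \<open>(intro linop_intros; auto intro!: H1_all)+\<close>)

lemma L1': assumes "U \<in> H1" "V \<in> H1" "1 \<le> i" "1 \<le> j"
  shows "plusprod (hcons i U) (circ j V) = circ j (plusprod (hcons i U) V) - ccons2 i j (plusprod U V) + hcons i (plusprod U (circ j V))"
proof (rule bilift[where F="\<lambda>U V. plusprod (hcons i U) (circ j V)" and G="\<lambda>U V. circ j (plusprod (hcons i U) V) - ccons2 i j (plusprod U V) + hcons i (plusprod U (circ j V))", OF _ _ _ _ _ assms(1,2)])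
  fix u v :: "nat list" assume u: "lw u" and v: "lw v"
  obtain i0 where i: "i = Suc i0" using assms(3) by (rule sucE)
  obtain j0 where j: "j = Suc j0" using assms(4) by (rule sucE)
  show "plusprod (hcons i (wd u)) (circ j (wd v)) = circ j (plusprod (hcons i (wd u)) (wd v)) - ccons2 i j (plusprod (wd u) (wd v)) + hcons i (plusprod (wd u) (circ j (wd v)))"
  proof (cases v)
    case Nil
    then show ?thesis using u unfolding i j by (simp add: algebra_simps)
  next
    case (Cons l v')
    with v have l: "1 \<le> l" and v': "lw v'" by auto
    obtain l0 where l0: "l = Suc l0" using l by (rule sucE)
    show ?thesis using u v' unfolding Cons i j l0
      by (simp add: P_add_r P_K_r H1_simps circ_add circ_K circ_hcons hcons_add hcons_K hcons_diff
          del: circw.simps plusw.simps add: circw_Cons plusw.simps(3))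
        (simp add: algebra_simps)
  qed
qed (use assms in \<open>(intro linop_intros; auto intro!: H1_all)+\<close>)

lemma L2: assumes "U \<in> H1" "V \<in> H1" "1 \<le> i" "1 \<le> j"
  shows "plusprod (circ i U) (circ j V) = circ i (plusprod U (circ j V)) + circ j (plusprod (circ i U) V) - circ2 i j (plusprod U V)"
proof (rule bilift[where F="\<lambda>U V. plusprod (circ i U) (circ j V)" and G="\<lambda>U V. circ i (plusprod U (circ j V)) + circ j (plusprod (circ i U) V) - circ2 i j (plusprod U V)", OF _ _ _ _ _ assms(1,2)])
  fix u v :: "nat list" assume u: "lw u" and v: "lw v"
  obtain i0 where i: "i = Suc i0" using assms(3) by (rule sucE)
  obtain j0 where j: "j = Suc j0" using assms(4) by (rule sucE)
  show "plusprod (circ i (wd u)) (circ j (wd v)) = circ i (plusprod (wd u) (circ j (wd v))) + circ j (plusprod (circ i (wd u)) (wd v)) - circ2 i j (plusprod (wd u) (wd v))"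
  proof (cases u)
    case Nil
    then show ?thesis using v assms by (simp add: P_Nil_l fin_circw circ_circw del: circw.simps add: circw_Nil)
  next
    case (Cons k u')
    with u have k: "1 \<le> k" and u': "lw u'" by auto
    obtain k0 where k0: "k = Suc k0" using k by (rule sucE)
    show ?thesis
    proof (cases v)
      case Nil
      have "circ j (circw i u) = circw (i + j) u + K hbar * circw (i + j - 1) u"
        using u assms circ_circw[of i u j] by (simp add: add.commute)
      then show ?thesis using u assms Nil
        by (simp add: P_Nil_r fin_circw del: circw.simps add: circw_Nil)
    next
      case (Cons l v')
      with v have l: "1 \<le> l" and v': "lw v'" by auto
      obtain l0 where l0: "l = Suc l0" using l by (rule sucE)
      show ?thesis using u' v' unfolding Cons \<open>u = k # u'\<close> i j l0 k0
        by (simp add: P_add_r P_K_r P_add_l P_K_l H1_simps circ_add circ_K circ_hcons hcons_add hcons_K hcons_diff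
            circ_diff del: circw.simps plusw.simps add: circw_Cons plusw.simps(3))
          (simp add: algebra_simps)
    qed
  qed
qed (use assms in \<open>(intro linop_intros; auto intro!: H1_all)+\<close>)

lemma H1_tw: "lw u \<Longrightarrow> lw v \<Longrightarrow> tw u v \<in> H1"
  by (induct u v rule: tw.induct) (auto intro!: H1_all)

lemma main_w: "lw x \<Longrightarrow> lw y \<Longrightarrow> S (tw x y) = plusprod (Sw x) (Sw y)"
proof (induct x y rule: tw.induct)
  case (1 v) then show ?case by (simp add: P_Nil_l)
next
  case (2 i u) then show ?case using P_Nil_r[of "Sw (i#u)"] fin_Sw[of "i#u"]
    by (simp only: tw.simps Sw.simps(1) S_wd)
next
  case (3 i u j v)
  then have i: "1 \<le> i" and j: "1 \<le> j" and u: "lw u" and v: "lw v" by auto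
  have IH1: "S (tw u (j # v)) = plusprod (Sw u) (Sw (j # v))"
    using 3(1) u v j by (simp del: Sw.simps)
  have IH2: "S (tw (i # u) v) = plusprod (Sw (i # u)) (Sw v)"
    using 3(2) u v i by (simp del: Sw.simps)
  have IH3: "S (tw u v) = plusprod (Sw u) (Sw v)"
    using 3(3) u v by (simp del: Sw.simps)
  have U: "Sw u \<in> H1" and V: "Sw v \<in> H1" using u v by (auto intro: H1_Sw)
  have A: "tw u (j # v) \<in> H1" "tw (i # u) v \<in> H1" "tw u v \<in> H1"
    using i j u v by (auto intro!: H1_tw)
  have "S (tw (i # u) (j # v)) =
      hcons i (S (tw u (j # v))) + K tvar * circ i (S (tw u (j # v)))
    + (hcons j (S (tw (i # u) v)) + K tvar * circ j (S (tw (i # u) v)))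
    + K (1 - 2 * tvar) * (hcons (i + j) (S (tw u v)) + K tvar * circ (i + j) (S (tw u v))
        + K hbar * (hcons (i + j - 1) (S (tw u v)) + K tvar * circ (i + j - 1) (S (tw u v))))
    + K (tvar ^ 2 - tvar) * (circ (i + j) (S (tw u v)) + K hbar * circ (i + j - 1) (S (tw u v)))"
    using i j A by (simp add: S_add S_K S_hcons S_circ H1_simps H1_fin del: tw.simps add: tw.simps(3))
  also have "\<dots> = plusprod (Sw (i # u)) (Sw (j # v))"
    unfolding IH1 IH2 IH3 using i j U V
    by (simp add: P_add_r P_K_r P_add_l P_K_l H1_simps H1_fin circ_add circ_K hcons_add hcons_K
       P0 L1 L1' L2 K_diff K_mult K_numeral K_one K_pow del: Sw.simps add: Sw_Cons')
      (simp add: algebra_simps power2_eq_square)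
  finally show ?case .
qed

lemma circw_len: "circw i w x \<noteq> 0 \<Longrightarrow> length x = length w"
  by (cases w) (auto simp: wd_def split: if_splits)

lemma lin_nz: "lin f p x \<noteq> 0 \<Longrightarrow> \<exists>u\<in>supp p. f u x \<noteq> 0"
  unfolding lin_def by (metis (no_types, lifting) mult_zero_right sum.neutral)

lemma Sw_tri: "(Sw w x \<noteq> 0 \<longrightarrow> length x \<le> length w) \<and> (length x = length w \<longrightarrow> Sw w x = (if x = w then 1 else 0))"
proof (induct w arbitrary: x)
  case Nil then show ?case by (auto simp: wd_def)
next
  case (Cons k w)
  have c: "circ k (Sw w) x \<noteq> 0 \<Longrightarrow> length x \<le> length w" for x
  proof -
    assume "circ k (Sw w) x \<noteq> 0"
    then obtain u where "u \<in> supp (Sw w)" "circw k u x \<noteq> 0"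
      unfolding circ_def using lin_nz by blast
    then show ?thesis using Cons[of u] circw_len by (fastforce simp: supp_iff)
  qed
  have h: "hcons k (Sw w) x = (case x of [] \<Rightarrow> 0 | k' # x' \<Rightarrow> if k' = k then Sw w x' else 0)" for x
    by (simp add: hcons_def)
  show ?case
  proof (intro conjI impI)
    assume "Sw (k # w) x \<noteq> 0"
    then have "hcons k (Sw w) x \<noteq> 0 \<or> circ k (Sw w) x \<noteq> 0" by (auto simp: K_def)
    then show "length x \<le> length (k # w)"
    proof
      assume "hcons k (Sw w) x \<noteq> 0"
      then show ?thesis using Cons by (auto simp: h split: list.splits if_splits)
    next
      assume "circ k (Sw w) x \<noteq> 0" then show ?thesis using c by fastforce
    qed
  next
    assume len: "length x = length (k # w)"
    then have "circ k (Sw w) x = 0" using c by fastforce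
    moreover have "hcons k (Sw w) x = (if x = k # w then 1 else 0)"
      using len Cons by (auto simp: h split: list.splits)
    ultimately show "Sw (k # w) x = (if x = k # w then 1 else 0)" by simp
  qed
qed

lemma S_nz: assumes "fin p" "p \<noteq> 0" shows "S p \<noteq> 0"
proof -
  have ne: "supp p \<noteq> {}" using assms(2) by (auto simp: supp_iff fun_eq_iff)
  define n where "n = Max (length ` supp p)"
  have "n \<in> length ` supp p" unfolding n_def using ne assms(1) by (intro Max_in) auto
  then obtain u where u: "u \<in> supp p" and un: "length u = n" by auto
  have mx: "length w \<le> length u" if "w \<in> supp p" for w
    unfolding un n_def using that assms(1) by (intro Max_ge) auto
  have "S p u = (\<Sum>w\<in>supp p. p w * Sw w u)" by (simp add: S_def lin_def)
  also have "\<dots> = (\<Sum>w\<in>supp p. if w = u then p w else 0)"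
  proof (rule sum.cong)
    fix w assume w: "w \<in> supp p"
    show "p w * Sw w u = (if w = u then p w else 0)"
    proof (cases "length w = length u")
      case True then show ?thesis using Sw_tri[of w u] by auto
    next
      case False
      with mx[OF w] have "length u > length w" by simp
      then have "Sw w u = 0" using Sw_tri[of w u] by fastforce
      then show ?thesis using False by auto
    qed
  qed simp
  also have "\<dots> = p u" using u assms(1) by simp
  finally have "S p u \<noteq> 0" using u by (simp add: supp_iff)
  then show ?thesis by auto
qed

lemma inj_S: "inj_on S H1"
proof (rule inj_onI)
  fix p q assume p: "p \<in> H1" and q: "q \<in> H1" and e: "S p = S q"
  have "S (p - q) = 0" using linop_diff_app[OF linop_S0 p q] e by simp
  then show "p = q" using S_nz[of "p - q"] p q by (auto simp: H1_fin)
qed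

lemma tprod_eq: "tprod v w = lin (\<lambda>u. lin (tw u) w) v"
  by (simp add: tprod_def bilin_def lin_def fun_eq_iff sum_distrib_left mult.assoc)

lemma H1_tprod: "v \<in> H1 \<Longrightarrow> w \<in> H1 \<Longrightarrow> tprod v w \<in> H1"
  unfolding tprod_eq by (auto intro!: H1_lin H1_tw H1_fin dest: H1_supp)

lemma S_tprod: assumes "v \<in> H1" "w \<in> H1" shows "S (tprod v w) = plusprod (S v) (S w)"
proof -
  have "S (tprod v w) = lin (\<lambda>u. S (lin (tw u) w)) v"
    unfolding tprod_eq using assms
    by (intro linopD(4)[OF linop_S0]) (auto intro!: H1_lin H1_tw H1_fin dest: H1_supp)
  also have "\<dots> = lin (\<lambda>u. lin (\<lambda>x. plusprod (Sw u) (Sw x)) w) v"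
  proof (rule lin_cong)
    fix u assume "u \<in> supp v"
    then have u: "lw u" by (rule H1_supp[OF assms(1)])
    have "S (lin (tw u) w) = lin (\<lambda>x. S (tw u x)) w"
      using assms u by (intro linopD(4)[OF linop_S0]) (auto intro!: H1_tw dest: H1_supp)
    also have "\<dots> = lin (\<lambda>x. plusprod (Sw u) (Sw x)) w"
      using assms u by (intro lin_cong) (auto intro!: main_w dest: H1_supp)
    finally show "S (lin (tw u) w) = lin (\<lambda>x. plusprod (Sw u) (Sw x)) w" .
  qed
  also have "\<dots> = lin (\<lambda>u. plusprod (Sw u) (S w)) v"
  proof (rule lin_cong)
    fix u assume "u \<in> supp v"
    then have u: "lw u" by (rule H1_supp[OF assms(1)])
    show "lin (\<lambda>x. plusprod (Sw u) (Sw x)) w = plusprod (Sw u) (S w)"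
      unfolding S_def using assms u
      by (intro linopD(4)[OF linop_Pr0, symmetric]) (auto intro!: H1_Sw dest: H1_supp)
  qed
  also have "\<dots> = plusprod (S v) (S w)"
    unfolding S_def[of v] using assms
    by (intro linopD(4)[OF linop_Pl0, symmetric]) (auto intro!: H1_Sw H1_lin H1_fin simp: S_def dest: H1_supp)
  finally show ?thesis .
qed

theorem proposition2p4:
  assumes "v \<in> H1" and "w \<in> H1"
  shows "tprod v w = inv_into H1 S (plusprod (S v) (S w))"
  using inj_S S_tprod[OF assms] H1_tprod[OF assms] by (metis inv_into_f_f)

end
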